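(* (1) Every (unpointed) endomorphism of $\mathbf{P}^1_k$ is unpointed naively homotopic to a pointed one. (2) Let $f,g$ be pointed rational functions. Then $f\overset{\mathrm{u}}{\sim}g$ if and only if there exists $\lambda\in k^\times$ with $f\overset{\mathrm{p}}{\sim}\lambda^2g$.
   Context: Let $k$ be a field. An (unpointed) endomorphism of $\mathbf{P}^1_k$ of degree $n$ is given by a pair $(A,B)$ of polynomials of degree $\le n$ in $k[X]$ with $\mathrm{res}_{n,n}(A,B)\neq0$, up to a common scalar (a $k$-point of the open subscheme $\mathscr{U}_n\subset\mathbf{P}^{2n+1}$ complementary to the resultant hypersurface); an unpointed naive homotopy is a $k[T]$-point of $\mathscr{U}_n$, and $\overset{\mathrm{u}}{\sim}$ is the equivalence relation generated by $F(0)\sim F(1)$. A pointed rational function (base point $\infty=[1:0]$ fixed) of degree $n$ is a pair $\frac{A}{B}$ with $A$ monic of degree $n$, $\deg B<n$ and $\mathrm{res}_{n,n}(A,B)$ invertible; pointed naive homotopies are such pairs over $k[T]$, and $\overset{\mathrm{p}}{\sim}$ is the equivalence relation they generate. For $g=\frac{A}{B}$ pointed, $\lambda^2g$ is the pointed rational function $\frac{A}{\lambda^{-2}B}$. *)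

theory Defs
  imports "Subresultants.Resultant_Prelim"
begin

definition res_nn :: "nat \<Rightarrow> 'a::comm_ring_1 poly \<Rightarrow> 'a poly \<Rightarrow> 'a" where
  "res_nn n A B = resultant_sub n n A B"

text \<open>k-points of U_n (representatives; points of P^{2n+1} are taken up to a common scalar).\<close>
definition unpointed_map :: "nat \<Rightarrow> 'k::field poly \<times> 'k poly \<Rightarrow> bool" where
  "unpointed_map n F \<longleftrightarrow> degree (fst F) \<le> n \<and> degree (snd F) \<le> n \<and>
     F \<noteq> (0, 0) \<and> res_nn n (fst F) (snd F) \<noteq> 0"

text \<open>k[T]-points of U_n: a unimodular coefficient vector (so it is a point of P^{2n+1} over k[T])
  on which the resultant is a unit of k[T].  Elements of k[T][X] are 'k poly poly,
  the outer variable being X, the coefficients lying in k[T].\<close>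
definition unpointed_homotopy :: "nat \<Rightarrow> 'k::field poly poly \<times> 'k poly poly \<Rightarrow> bool" where
  "unpointed_homotopy n F \<longleftrightarrow> degree (fst F) \<le> n \<and> degree (snd F) \<le> n \<and>
     (\<exists>c d :: nat \<Rightarrow> 'k poly. (\<Sum>i\<le>n. c i * coeff (fst F) i + d i * coeff (snd F) i) = 1) \<and>
     res_nn n (fst F) (snd F) dvd 1"

definition evalT :: "'k::comm_ring_1 \<Rightarrow> 'k poly poly \<Rightarrow> 'k poly" where
  "evalT t P = map_poly (\<lambda>c. poly c t) P"

definition evalT_pair :: "'k::comm_ring_1 \<Rightarrow> 'k poly poly \<times> 'k poly poly \<Rightarrow> 'k poly \<times> 'k poly" where
  "evalT_pair t F = (evalT t (fst F), evalT t (snd F))"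

text \<open>Unpointed naive homotopy relation on representatives: generated by F(0) ~ F(1) for
  homotopies F, together with the identification of proportional representatives
  (same point of P^{2n+1}).\<close>
inductive unpointed_htpy :: "nat \<Rightarrow> 'k::field poly \<times> 'k poly \<Rightarrow> 'k poly \<times> 'k poly \<Rightarrow> bool"
  for n where
  refl: "unpointed_map n F \<Longrightarrow> unpointed_htpy n F F"
| scal: "unpointed_map n F \<Longrightarrow> c \<noteq> 0 \<Longrightarrow>
          unpointed_htpy n F (smult c (fst F), smult c (snd F))"
| htpy: "unpointed_homotopy n H \<Longrightarrow> unpointed_htpy n (evalT_pair 0 H) (evalT_pair 1 H)"
| sym: "unpointed_htpy n F G \<Longrightarrow> unpointed_htpy n G F"
| trans: "unpointed_htpy n F G \<Longrightarrow> unpointed_htpy n G H \<Longrightarrow> unpointed_htpy n F H"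

text \<open>Pointed rational functions A/B of degree n over a commutative ring R (used for R = k, k[T]).\<close>
definition pointed_rf :: "nat \<Rightarrow> 'a::comm_ring_1 poly \<times> 'a poly \<Rightarrow> bool" where
  "pointed_rf n F \<longleftrightarrow> monic (fst F) \<and> degree (fst F) = n \<and>
     (snd F = 0 \<or> degree (snd F) < n) \<and> res_nn n (fst F) (snd F) dvd 1"

inductive pointed_htpy :: "nat \<Rightarrow> 'k::field poly \<times> 'k poly \<Rightarrow> 'k poly \<times> 'k poly \<Rightarrow> bool"
  for n where
  refl: "pointed_rf n F \<Longrightarrow> pointed_htpy n F F"
| htpy: "pointed_rf n H \<Longrightarrow> pointed_htpy n (evalT_pair 0 H) (evalT_pair 1 H)"
| sym: "pointed_htpy n F G \<Longrightarrow> pointed_htpy n G F"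
| trans: "pointed_htpy n F G \<Longrightarrow> pointed_htpy n G H \<Longrightarrow> pointed_htpy n F H"

text \<open>lambda^2 g = A / (lambda^{-2} B).\<close>
definition lam_sq :: "'k::field \<Rightarrow> 'k poly \<times> 'k poly \<Rightarrow> 'k poly \<times> 'k poly" where
  "lam_sq l g = (fst g, smult (inverse (l^2)) (snd g))"

end

theory Submission
  imports Defs
begin

definition act :: "'a::comm_ring_1 \<Rightarrow> 'a \<Rightarrow> 'a \<Rightarrow> 'a \<Rightarrow> 'a poly \<times> 'a poly \<Rightarrow> 'a poly \<times> 'a poly" where
  "act a b c d F = (smult a (fst F) + smult b (snd F), smult c (fst F) + smult d (snd F))"

definition blk :: "nat \<Rightarrow> 'a::comm_ring_1 \<Rightarrow> 'a \<Rightarrow> 'a \<Rightarrow> 'a \<Rightarrow> 'a mat" where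
  "blk n a b c d = mat (n+n) (n+n) (\<lambda>(i,k). if i < n then (if k = i then a else 0) + (if k = i + n then b else 0)
      else (if k + n = i then c else 0) + (if k = i then d else 0))"

abbreviation S where "S n F \<equiv> sylvester_mat_sub n n (fst F) (snd F)"

lemma sum_two:
  fixes f :: "nat \<Rightarrow> 'a::comm_ring_1"
  assumes "p < N" "q < N" "p \<noteq> q"
  shows "(\<Sum>k\<in>{0..<N}. ((if k = p then a else 0) + (if k = q then b else 0)) * f k) = a * f p + b * f q"
  using assms by (simp add: distrib_right sum.distrib if_distrib[where f="\<lambda>x. x * _"] sum.delta cong: if_cong)

lemma S_act: "S n (act a b c d F) = blk n a b c d * S n F"
proof (rule eq_matI)
  fix i j assume ij: "i < dim_row (blk n a b c d * S n F)" "j < dim_col (blk n a b c d * S n F)"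
  hence i: "i < n+n" and j: "j < n + n" by (auto simp: blk_def)
  have "(blk n a b c d * S n F) $$ (i,j) = (\<Sum>k\<in>{0..<n+n}. blk n a b c d $$ (i,k) * S n F $$ (k,j))"
    using i j by (simp add: blk_def scalar_prod_def)
  also have "\<dots> = (\<Sum>k\<in>{0..<n+n}. (if i < n then (if k = i then a else 0) + (if k = i + n then b else 0)
      else (if k = i - n then c else 0) + (if k = i then d else 0)) * S n F $$ (k,j))"
    using i by (intro sum.cong) (auto simp: blk_def)
  also have "\<dots> = (if i < n then a * S n F $$ (i,j) + b * S n F $$ (i+n,j) else c * S n F $$ (i-n,j) + d * S n F $$ (i,j))"
    using i by (cases "i < n") (simp_all add: sum_two)
  also have "\<dots> = S n (act a b c d F) $$ (i,j)"
    using i j by (cases "i < n") (auto simp: sylvester_mat_sub_index act_def algebra_simps)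
  finally show "S n (act a b c d F) $$ (i,j) = (blk n a b c d * S n F) $$ (i,j)" ..
qed (auto simp: blk_def)

definition F0 :: "nat \<Rightarrow> 'a::comm_ring_1 poly \<times> 'a poly" where "F0 n = (monom 1 n, 1)"

abbreviation R where "R n F \<equiv> res_nn n (fst F) (snd F)"

lemma S_F0: "S n (F0 n) = 1\<^sub>m (n+n)"
proof (rule eq_matI)
  fix i j assume ij: "i < dim_row (1\<^sub>m (n+n) :: 'a mat)" "j < dim_col (1\<^sub>m (n+n) :: 'a mat)"
  hence i: "i < n+n" and j: "j < n+n" by auto
  show "S n (F0 n) $$ (i,j) = (1\<^sub>m (n+n) :: 'a mat) $$ (i,j)"
    using i j by (auto simp: sylvester_mat_sub_index F0_def coeff_monom coeff_1)
qed auto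

lemma blk_eq: "blk n a b c d = S n (act a b c d (F0 n))"
  by (simp add: S_act S_F0 blk_def)

lemma R_act: "R n (act a b c d F) = det (blk n a b c d) * R n F"
  unfolding res_nn_def resultant_sub_def S_act
  by (rule det_mult) (auto simp: blk_def)

lemma R_F0: "R n (F0 n) = (1::'a::comm_ring_1)"
  unfolding res_nn_def resultant_sub_def S_F0 by simp

lemma act_comp: "act a b c d (act a' b' c' d' F) = act (a*a'+b*c') (a*b'+b*d') (c*a'+d*c') (c*b'+d*d') F"
  by (simp add: act_def algebra_simps smult_add_right smult_add_left)

lemma act_id: "act 1 0 0 1 F = F"
  by (simp add: act_def)

lemma blk_inv:
  assumes "a'*a + b'*c = 1" "a'*b+b'*d = 0" "c'*a+d'*c = 0" "c'*b+d'*d = (1::'a::comm_ring_1)"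
  shows "det (blk n a' b' c' d') * det (blk n a b c d) = 1"
proof -
  have "R n (act a' b' c' d' (act a b c d (F0 n))) = R n (F0 n :: 'a poly \<times> 'a poly)"
    unfolding act_comp assms act_id ..
  thus ?thesis unfolding R_act R_F0 by (simp add: mult.assoc)
qed

lemma R_act_unit:
  assumes "a'*a + b'*c = 1" "a'*b+b'*d = 0" "c'*a+d'*c = 0" "c'*b+d'*d = (1::'a::comm_ring_1)"
    and "R n F dvd 1"
  shows "R n (act a b c d F) dvd 1"
proof -
  have "det (blk n a b c d) dvd 1" using blk_inv[OF assms(1-4)] by (metis dvd_triv_right)
  thus ?thesis unfolding R_act using assms(5) by simp
qed

definition liftP :: "'k::comm_ring_1 poly \<times> 'k poly \<Rightarrow> 'k poly poly \<times> 'k poly poly" where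
  "liftP F = (map_poly (\<lambda>c. [:c:]) (fst F), map_poly (\<lambda>c. [:c:]) (snd F))"

lemma coeff_evalT[simp]: "coeff (evalT t X) i = poly (coeff X i) t"
  by (simp add: evalT_def coeff_map_poly)

lemma evalT_lin: "evalT t (smult p X + smult q Y) = smult (poly p t) (evalT t X) + smult (poly q t) (evalT t Y)"
  by (rule poly_eqI) (simp add: algebra_simps)

lemma evalT_act: "evalT_pair t (act p q r s H) = act (poly p t) (poly q t) (poly r t) (poly s t) (evalT_pair t H)"
  by (simp add: evalT_pair_def act_def evalT_lin)

lemma coeff_lift[simp]: "coeff (map_poly (\<lambda>c. [:c:]) A) i = [:coeff A i:]"
  by (simp add: coeff_map_poly)

lemma evalT_lift[simp]: "evalT_pair t (liftP F) = F"
  by (auto simp: evalT_pair_def liftP_def prod_eq_iff intro!: poly_eqI)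

lemma degree_lift[simp]: "degree (map_poly (\<lambda>c. [:c:]) A) = degree A"
  by (rule degree_map_poly) auto

lemma R_evalT: "R n (evalT_pair t H) = poly (R n H) t"
proof -
  have "S n (evalT_pair t H) = map_mat (\<lambda>c. poly c t) (S n H)"
    by (simp add: evalT_pair_def evalT_def sylvester_mat_sub_map)
  moreover have "comm_ring_hom (\<lambda>p. poly p t)" by unfold_locales auto
  ultimately show ?thesis unfolding res_nn_def resultant_sub_def by (simp add: comm_ring_hom.hom_det)
qed

lemma const_hom: "comm_ring_hom (\<lambda>c::'a::comm_ring_1. [:c:])"
  by unfold_locales (auto simp: one_pCons)

lemma R_lift: "R n (liftP F) = [:R n F:]"
proof -
  have "S n (liftP F) = map_mat (\<lambda>c. [:c:]) (S n F)"
    by (simp add: liftP_def sylvester_mat_sub_map)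
  thus ?thesis unfolding res_nn_def resultant_sub_def by (simp add: comm_ring_hom.hom_det[OF const_hom])
qed

lemma field_dvd1: "((x::'k::field) dvd 1) \<longleftrightarrow> x \<noteq> 0"
  by (metis dvd_def dvd_0_left_iff one_neq_zero right_inverse)

lemma const_unit: "(x::'k::field) \<noteq> 0 \<Longrightarrow> [:x:] dvd 1"
  by (simp add: is_unit_const_poly_iff)

lemma degree_lin_le: "degree X \<le> n \<Longrightarrow> degree Y \<le> n \<Longrightarrow> degree (smult a X + smult b Y) \<le> n"
  by (meson degree_add_le degree_smult_le order_trans)

lemma degree_lin_le': "degree p \<le> 0 \<Longrightarrow> degree q \<le> 0 \<Longrightarrow> degree X \<le> n \<Longrightarrow> degree Y \<le> n \<Longrightarrow> degree (p * X + q * Y) \<le> n"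
  by (metis add.left_neutral degree_add_le degree_mult_le le_zero_eq order_trans)

lemma nonzero_coeff:
  assumes "unpointed_map n F"
  obtains j where "j \<le> n" "coeff (fst F) j \<noteq> 0 \<or> coeff (snd F) j \<noteq> 0"
proof (cases "fst F = 0")
  case True
  with assms have "snd F \<noteq> 0" by (cases F) (auto simp: unpointed_map_def)
  thus ?thesis using that[of "degree (snd F)"] assms by (auto simp: unpointed_map_def)
next
  case False
  thus ?thesis using that[of "degree (fst F)"] assms by (auto simp: unpointed_map_def)
qed

lemma unimod_delta:
  fixes x y :: "'k::field poly"
  assumes "j \<le> n" "u * coeff X j + v * coeff Y j = 1"
  shows "\<exists>c d :: nat \<Rightarrow> 'k poly. (\<Sum>i\<le>n. c i * coeff X i + d i * coeff Y i) = 1"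
proof (intro exI)
  have "(\<Sum>i\<le>n. (if i = j then u else 0) * coeff X i + (if i = j then v else 0) * coeff Y i)
     = (\<Sum>i\<le>n. if i = j then u * coeff X j + v * coeff Y j else 0)"
    by (rule sum.cong) auto
  also have "\<dots> = 1" using assms by (simp add: sum.delta)
  finally show "(\<Sum>i\<le>n. (if i = j then u else 0) * coeff X i + (if i = j then v else 0) * coeff Y i) = 1" .
qed

lemma htpy_mat:
  fixes F :: "'k::field poly \<times> 'k poly" and p q r s p' q' r' s' :: "'k poly"
  assumes F: "unpointed_map n F"
    and inv: "p'*p + q'*r = 1" "p'*q+q'*s = 0" "r'*p+s'*r = 0" "r'*q+s'*s = 1"
  shows "unpointed_htpy n (act (poly p 0) (poly q 0) (poly r 0) (poly s 0) F)
                          (act (poly p 1) (poly q 1) (poly r 1) (poly s 1) F)"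
proof -
  define H where "H = act p q r s (liftP F)"
  have "unpointed_homotopy n H"
    unfolding unpointed_homotopy_def
  proof (intro conjI)
    show "degree (fst H) \<le> n" "degree (snd H) \<le> n"
      using F by (auto simp: H_def act_def liftP_def unpointed_map_def intro!: degree_lin_le)
    have "[:R n F:] dvd 1" using F by (intro const_unit) (auto simp: unpointed_map_def)
    thus "R n H dvd 1" unfolding H_def using R_act_unit[OF inv] R_lift by metis
    obtain j where j: "j \<le> n" "coeff (fst F) j \<noteq> 0 \<or> coeff (snd F) j \<noteq> 0"
      using nonzero_coeff[OF F] by blast
    define a where "a = coeff (fst F) j"
    define b where "b = coeff (snd F) j"
    have x: "coeff (fst H) j = p * [:a:] + q * [:b:]" and y: "coeff (snd H) j = r * [:a:] + s * [:b:]"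
      by (simp_all add: H_def act_def liftP_def a_def b_def)
    have e1: "p' * coeff (fst H) j + q' * coeff (snd H) j = [:a:]"
    proof -
      have "p' * coeff (fst H) j + q' * coeff (snd H) j = (p'*p + q'*r) * [:a:] + (p'*q+q'*s) * [:b:]"
        unfolding x y by (simp add: algebra_simps)
      thus ?thesis using inv by simp
    qed
    have e2: "r' * coeff (fst H) j + s' * coeff (snd H) j = [:b:]"
    proof -
      have "r' * coeff (fst H) j + s' * coeff (snd H) j = (r'*p + s'*r) * [:a:] + (r'*q+s'*s) * [:b:]"
        unfolding x y by (simp add: algebra_simps)
      thus ?thesis using inv by simp
    qed
    show "\<exists>c d :: nat \<Rightarrow> 'k poly. (\<Sum>i\<le>n. c i * coeff (fst H) i + d i * coeff (snd H) i) = 1"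
    proof (cases "a \<noteq> 0")
      case True
      have "[:inverse a:] * p' * coeff (fst H) j + [:inverse a:] * q' * coeff (snd H) j = [:inverse a:] * (p' * coeff (fst H) j + q' * coeff (snd H) j)"
        by (simp only: algebra_simps)
      also have "\<dots> = [:inverse a:] * [:a:]" using e1 by simp
      also have "\<dots> = 1" using True by (simp add: one_pCons)
      finally show ?thesis by (rule unimod_delta[OF j(1)])
    next
      case False
      hence b0: "b \<noteq> 0" using j(2) by (simp add: a_def b_def)
      have "[:inverse b:] * r' * coeff (fst H) j + [:inverse b:] * s' * coeff (snd H) j = [:inverse b:] * (r' * coeff (fst H) j + s' * coeff (snd H) j)"
        by (simp only: algebra_simps)
      also have "\<dots> = [:inverse b:] * [:b:]" using e2 by simp
      also have "\<dots> = 1" using b0 by (simp add: one_pCons)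
      finally show ?thesis by (rule unimod_delta[OF j(1)])
    qed
  qed
  from unpointed_htpy.htpy[OF this] show ?thesis unfolding H_def evalT_act evalT_lift .
qed

lemma det_zero_col:
  assumes A: "A \<in> carrier_mat N N" and j: "j < N" and z: "\<And>i. i < N \<Longrightarrow> A $$ (i,j) = 0"
  shows "det A = (0::'a::comm_ring_1)"
proof -
  have "signof p * (\<Prod>i = 0..<N. A $$ (i, p i)) = 0" if p: "p permutes {0..<N}" for p
  proof -
    have "Hilbert_Choice.inv p j \<in> {0..<N}" using p j by (simp add: permutes_in_image permutes_inv)
    moreover have "p (Hilbert_Choice.inv p j) = j" using p by (simp add: permutes_inverses(1))
    ultimately have "(\<Prod>i = 0..<N. A $$ (i, p i)) = 0"
      using z by (intro prod_zero bexI[of _ "Hilbert_Choice.inv p j"]) auto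
    thus ?thesis by simp
  qed
  thus ?thesis unfolding det_def'[OF A] by (intro sum.neutral) auto
qed

lemma lead_nonzero:
  assumes F: "unpointed_map n F"
  shows "coeff (fst F) n \<noteq> 0 \<or> coeff (snd F) n \<noteq> 0"
proof (rule ccontr)
  assume c: "\<not> ?thesis"
  show False
  proof (cases "n = 0")
    case True
    with F c have "fst F = 0" "snd F = 0" unfolding unpointed_map_def
      by (metis degree_0_id le_zero_eq pCons_0_0)+
    with F show False by (cases F) (auto simp: unpointed_map_def)
  next
    case False
    have "det (S n F) = 0"
      by (rule det_zero_col[of _ "n+n" 0]) (use False c in \<open>auto simp: sylvester_mat_sub_index\<close>)
    with F show False by (auto simp: unpointed_map_def res_nn_def resultant_sub_def)
  qed
qed

lemma inv_eqs:
  fixes a b c d :: "'k::field"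
  assumes "a*d - b*c \<noteq> 0"
  shows "(d/(a*d - b*c))*a + (-b/(a*d - b*c))*c = 1" "(d/(a*d - b*c))*b + (-b/(a*d - b*c))*d = 0"
    "(-c/(a*d - b*c))*a + (a/(a*d - b*c))*c = 0" "(-c/(a*d - b*c))*b + (a/(a*d - b*c))*d = 1"
proof -
  obtain D where D: "D = a*d - b*c" by blast
  with assms have "D \<noteq> 0" by simp
  hence "(d/D)*a + (-b/D)*c = 1 \<and> (d/D)*b + (-b/D)*d = 0 \<and> (-c/D)*a + (a/D)*c = 0 \<and> (-c/D)*b + (a/D)*d = 1"
    using D by (simp add: divide_simps)
  thus "(d/(a*d - b*c))*a + (-b/(a*d - b*c))*c = 1" "(d/(a*d - b*c))*b + (-b/(a*d - b*c))*d = 0"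
    "(-c/(a*d - b*c))*a + (a/(a*d - b*c))*c = 0" "(-c/(a*d - b*c))*b + (a/(a*d - b*c))*d = 1"
    using D by auto
qed

lemma umap_act:
  fixes F :: "'k::field poly \<times> 'k poly"
  assumes F: "unpointed_map n F" and D: "a*d - b*c \<noteq> 0"
  shows "unpointed_map n (act a b c d F)"
proof -
  note ie = inv_eqs[OF D]
  have "R n (act a b c d F) dvd 1"
    by (rule R_act_unit[OF ie]) (use F in \<open>simp add: unpointed_map_def field_dvd1\<close>)
  moreover have "act a b c d F \<noteq> (0,0)"
  proof
    assume "act a b c d F = (0,0)"
    hence "act (d/(a*d-b*c)) (-b/(a*d-b*c)) (-c/(a*d-b*c)) (a/(a*d-b*c)) (act a b c d F) = (0,0)"
      by (simp add: act_def)
    hence "F = (0,0)" unfolding act_comp ie act_id .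
    with F show False by (simp add: unpointed_map_def)
  qed
  ultimately show ?thesis using F
    by (auto simp: unpointed_map_def act_def field_dvd1 intro!: degree_lin_le)
qed

lemma E12:
  fixes F :: "'k::field poly \<times> 'k poly"
  assumes F: "unpointed_map n F"
  shows "unpointed_htpy n F (act 1 b 0 1 F)"
proof -
  have "unpointed_htpy n (act (poly 1 0) (poly [:0,b:] 0) (poly 0 0) (poly 1 0) F)
                          (act (poly 1 1) (poly [:0,b:] 1) (poly 0 1) (poly 1 1) F)"
    by (rule htpy_mat[OF F, where p=1 and q="[:0,b:]" and r=0 and s=1 and p'=1 and q'="-[:0,b:]" and r'=0 and s'=1]) auto
  thus ?thesis by (simp add: act_id)
qed

lemma E21:
  fixes F :: "'k::field poly \<times> 'k poly"
  assumes F: "unpointed_map n F"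
  shows "unpointed_htpy n F (act 1 0 c 1 F)"
proof -
  have "unpointed_htpy n (act (poly 1 0) (poly 0 0) (poly [:0,c:] 0) (poly 1 0) F)
                          (act (poly 1 1) (poly 0 1) (poly [:0,c:] 1) (poly 1 1) F)"
    by (rule htpy_mat[OF F, where p=1 and q=0 and r="[:0,c:]" and s=1 and p'=1 and q'=0 and r'="-[:0,c:]" and s'=1]) auto
  thus ?thesis by (simp add: act_id)
qed

lemma SL2_c:
  fixes F :: "'k::field poly \<times> 'k poly"
  assumes F: "unpointed_map n F" and det: "a*d - b*c = 1" and c: "c \<noteq> 0"
  shows "unpointed_htpy n F (act a b c d F)"
proof -
  define x where "x = (a-1)/c"
  define y where "y = (d-1)/c"
  define G1 where "G1 = act 1 y 0 1 F"
  define G2 where "G2 = act 1 0 c 1 G1"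
  have G1: "unpointed_map n G1" unfolding G1_def by (rule umap_act[OF F]) simp
  have G2: "unpointed_map n G2" unfolding G2_def by (rule umap_act[OF G1]) simp
  have "act 1 x 0 1 G2 = act a b c d F"
    unfolding G2_def G1_def act_comp using det c
    by (simp add: x_def y_def field_simps)
  moreover have "unpointed_htpy n F (act 1 x 0 1 G2)"
    using unpointed_htpy.trans[OF unpointed_htpy.trans[OF E12[OF F, of y, folded G1_def] E21[OF G1, of c, folded G2_def]] E12[OF G2, of x]]
    unfolding G1_def G2_def .
  ultimately show ?thesis by simp
qed

lemma SL2:
  fixes F :: "'k::field poly \<times> 'k poly"
  assumes F: "unpointed_map n F" and det: "a*d - b*c = 1"
  shows "unpointed_htpy n F (act a b c d F)"
proof (cases "c = 0")
  case False thus ?thesis using SL2_c[OF F det] by blast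
next
  case True
  hence a: "a \<noteq> 0" using det by auto
  have h1: "unpointed_htpy n F (act a b a (b+d) F)"
    by (rule SL2_c[OF F _ a]) (use det True in \<open>simp add: algebra_simps\<close>)
  have G: "unpointed_map n (act a b a (b+d) F)"
    by (rule umap_act[OF F]) (use det True in \<open>simp add: algebra_simps\<close>)
  have "act 1 0 (-1) 1 (act a b a (b+d) F) = act a b c d F"
    unfolding act_comp using True by simp
  with unpointed_htpy.trans[OF h1 E21[OF G, of "-1"]] show ?thesis by simp
qed

lemma monic_of:
  fixes X :: "'a::comm_ring_1 poly"
  assumes "degree X \<le> n" "coeff X n = 1"
  shows "monic X \<and> degree X = n"
proof -
  have "X \<noteq> 0" using assms(2) by auto
  have "degree X \<ge> n" using assms(2) by (metis le_degree zero_neq_one)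
  hence "degree X = n" using assms(1) by simp
  thus ?thesis using assms(2) by simp
qed

lemma small_of:
  fixes X :: "'a::comm_ring_1 poly"
  assumes "degree X \<le> n" "coeff X n = 0"
  shows "X = 0 \<or> degree X < n"
proof (cases "X = 0")
  case False
  hence "degree X \<noteq> n" using assms(2) by (metis leading_coeff_0_iff)
  thus ?thesis using assms(1) by simp
qed simp

lemma pointed_of:
  fixes F :: "'k::field poly \<times> 'k poly"
  assumes "unpointed_map n F" "coeff (fst F) n = 1" "coeff (snd F) n = 0"
  shows "pointed_rf n F"
  using assms monic_of[of "fst F" n] small_of[of "snd F" n]
  by (auto simp: unpointed_map_def pointed_rf_def field_dvd1)

lemma pointed_umap:
  fixes F :: "'k::field poly \<times> 'k poly"
  assumes "pointed_rf n F"
  shows "unpointed_map n F"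
  using assms by (auto simp: unpointed_map_def pointed_rf_def field_dvd1)

lemma pointed_coeffs:
  fixes F :: "'a::comm_ring_1 poly \<times> 'a poly"
  assumes "pointed_rf n F"
  shows "coeff (fst F) n = 1" "coeff (snd F) n = 0" "degree (fst F) \<le> n" "degree (snd F) \<le> n"
  using assms by (auto simp: pointed_rf_def coeff_eq_0)

lemma normalizer:
  fixes F :: "'k::field poly \<times> 'k poly"
  assumes F: "unpointed_map n F"
  shows "\<exists>a b c d. a*d - b*c = 1 \<and> pointed_rf n (act a b c d F)"
proof -
  define \<alpha> where "\<alpha> = coeff (fst F) n"
  define \<beta> where "\<beta> = coeff (snd F) n"
  have ab: "\<alpha> \<noteq> 0 \<or> \<beta> \<noteq> 0" using lead_nonzero[OF F] by (simp add: \<alpha>_def \<beta>_def)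
  define u where "u = (if \<alpha> \<noteq> 0 then 1/\<alpha> else 0)"
  define v where "v = (if \<alpha> \<noteq> 0 then 0 else 1/\<beta>)"
  have uv: "u*\<alpha> + v*\<beta> = 1" using ab by (auto simp: u_def v_def)
  have "pointed_rf n (act u v (-\<beta>) \<alpha> F)"
  proof (rule pointed_of)
    show "unpointed_map n (act u v (-\<beta>) \<alpha> F)" by (rule umap_act[OF F]) (use uv in \<open>simp add: algebra_simps\<close>)
    show "coeff (fst (act u v (- \<beta>) \<alpha> F)) n = 1" using uv by (simp add: act_def \<alpha>_def \<beta>_def)
    show "coeff (snd (act u v (- \<beta>) \<alpha> F)) n = 0" by (simp add: act_def \<alpha>_def \<beta>_def)
  qed
  moreover have "u*\<alpha> - v*(-\<beta>) = 1" using uv by simp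
  ultimately show ?thesis by blast
qed

lemma part1:
  fixes F :: "'k::field poly \<times> 'k poly"
  assumes F: "unpointed_map n F"
  shows "\<exists>G. pointed_rf n G \<and> unpointed_htpy n F G"
  using normalizer[OF F] SL2[OF F] by blast

lemma phom_uhom:
  fixes H :: "'k::field poly poly \<times> 'k poly poly"
  assumes "pointed_rf n H"
  shows "unpointed_homotopy n H"
  unfolding unpointed_homotopy_def
proof (intro conjI)
  note pc = pointed_coeffs[OF assms]
  show "degree (fst H) \<le> n" "degree (snd H) \<le> n" using pc by auto
  show "R n H dvd 1" using assms by (simp add: pointed_rf_def)
  show "\<exists>c d :: nat \<Rightarrow> 'k poly. (\<Sum>i\<le>n. c i * coeff (fst H) i + d i * coeff (snd H) i) = 1"
    by (rule unimod_delta[of n n 1 _ 0]) (use pc in auto)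
qed

lemma phtpy_uhtpy:
  fixes F G :: "'k::field poly \<times> 'k poly"
  assumes "pointed_htpy n F G"
  shows "unpointed_htpy n F G"
  using assms
proof induction
  case (refl F) thus ?case by (intro unpointed_htpy.refl pointed_umap)
next
  case (htpy H) thus ?case by (intro unpointed_htpy.htpy phom_uhom)
next
  case (sym F G) thus ?case by (blast intro: unpointed_htpy.sym)
next
  case (trans F G H) thus ?case by (blast intro: unpointed_htpy.trans)
qed

lemma lam_sq_act: "lam_sq l g = act 1 0 0 (inverse (l^2)) g"
  by (simp add: lam_sq_def act_def)

lemma lam_sq_uhtpy:
  fixes g :: "'k::field poly \<times> 'k poly"
  assumes g: "unpointed_map n g" and l: "l \<noteq> 0"
  shows "unpointed_htpy n (lam_sq l g) g"
proof -
  have m: "unpointed_map n (lam_sq l g)" unfolding lam_sq_act by (rule umap_act[OF g]) (use l in simp)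
  have "unpointed_htpy n (lam_sq l g) (smult l (fst (lam_sq l g)), smult l (snd (lam_sq l g)))"
    by (rule unpointed_htpy.scal[OF m l])
  moreover have "(smult l (fst (lam_sq l g)), smult l (snd (lam_sq l g))) = act l 0 0 (1/l) g"
    using l by (simp add: lam_sq_def act_def power2_eq_square field_simps)
  moreover have "unpointed_htpy n g (act l 0 0 (1/l) g)" by (rule SL2[OF g]) (use l in simp)
  ultimately show ?thesis by (metis unpointed_htpy.sym unpointed_htpy.trans)
qed

definition SR :: "'k::field poly \<times> 'k poly \<Rightarrow> 'k poly \<times> 'k poly \<Rightarrow> bool" where
  "SR X Y \<longleftrightarrow> (\<exists>a b c d \<mu>. \<mu> \<noteq> 0 \<and> a*d - b*c = \<mu>^2 \<and> Y = act a b c d X)"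

lemma SR_refl: "SR X X"
  unfolding SR_def by (rule exI[of _ 1], rule exI[of _ 0], rule exI[of _ 0], rule exI[of _ 1], rule exI[of _ 1]) (simp add: act_id)

lemma SR_scal: "c \<noteq> 0 \<Longrightarrow> SR X (smult c (fst X), smult c (snd X))"
  unfolding SR_def by (rule exI[of _ c], rule exI[of _ 0], rule exI[of _ 0], rule exI[of _ c], rule exI[of _ c])
    (simp add: act_def power2_eq_square)

lemma SR_trans: assumes "SR X Y" "SR Y Z" shows "SR X Z"
proof -
  obtain a b c d \<mu> where 1: "\<mu> \<noteq> 0" "a*d - b*c = \<mu>^2" "Y = act a b c d X" using assms(1) unfolding SR_def by blast
  obtain a' b' c' d' \<nu> where 2: "\<nu> \<noteq> 0" "a'*d' - b'*c' = \<nu>^2" "Z = act a' b' c' d' Y" using assms(2) unfolding SR_def by blast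
  have "(a'*a+b'*c)*(c'*b+d'*d) - (a'*b+b'*d)*(c'*a+d'*c) = (a'*d' - b'*c') * (a*d - b*c)"
    by (simp add: algebra_simps)
  also have "\<dots> = (\<nu>*\<mu>)^2" using 1 2 by (simp add: power_mult_distrib)
  finally have "(a'*a+b'*c)*(c'*b+d'*d) - (a'*b+b'*d)*(c'*a+d'*c) = (\<nu>*\<mu>)^2" .
  moreover have "Z = act (a'*a+b'*c) (a'*b+b'*d) (c'*a+d'*c) (c'*b+d'*d) X"
    using 1 2 by (simp add: act_comp)
  moreover have "\<nu>*\<mu> \<noteq> 0" using 1 2 by simp
  ultimately show ?thesis unfolding SR_def by blast
qed

lemma SR_sym: assumes "SR X Y" shows "SR Y X"
proof -
  obtain a b c d \<mu> where 1: "\<mu> \<noteq> 0" "a*d - b*c = \<mu>^2" "Y = act a b c d X" using assms(1) unfolding SR_def by blast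
  define D where "D = a*d - b*c"
  have D: "D \<noteq> 0" using 1 by (simp add: D_def)
  note ie = inv_eqs[OF D[unfolded D_def]]
  have "X = act (d/D) (-b/D) (-c/D) (a/D) Y" unfolding 1(3) act_comp D_def ie act_id ..
  moreover have "(d/D)*(a/D) - (-b/D)*(-c/D) = (inverse \<mu>)^2"
  proof -
    have "(d/D)*(a/D) - (-b/D)*(-c/D) = (a*d - b*c)/(D*D)" by (simp add: divide_simps algebra_simps)
    also have "\<dots> = 1/D" using D by (simp add: D_def[symmetric])
    also have "\<dots> = (inverse \<mu>)^2" using 1 by (simp add: D_def power_inverse divide_inverse)
    finally show ?thesis .
  qed
  moreover have "inverse \<mu> \<noteq> 0" using 1 by simp
  ultimately show ?thesis unfolding SR_def by blast
qed

lemma cmp: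
  fixes X Y :: "'k::field poly \<times> 'k poly"
  assumes X: "pointed_rf n X" and Y: "pointed_rf n Y" and XY: "SR X Y"
  shows "\<exists>l. l \<noteq> 0 \<and> pointed_htpy n Y (lam_sq l X)"
proof -
  obtain a b c d \<mu> where 1: "\<mu> \<noteq> 0" "a*d - b*c = \<mu>^2" "Y = act a b c d X" using XY unfolding SR_def by blast
  note px = pointed_coeffs[OF X] and py = pointed_coeffs[OF Y]
  have a: "a = 1" using px py 1(3) by (simp add: act_def)
  have c: "c = 0" using px py 1(3) by (simp add: act_def)
  have d: "d = \<mu>^2" using 1 a c by simp
  have d0: "d \<noteq> 0" using d 1 by simp
  define H where "H = act 1 [:b,-b:] 0 [:d:] (liftP X)"
  have "pointed_rf n H" unfolding pointed_rf_def
  proof (intro conjI)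
    have "degree (fst H) \<le> n" unfolding H_def act_def liftP_def fst_conv snd_conv
      by (rule degree_lin_le) (use px in auto)
    moreover have "coeff (fst H) n = 1" using px by (simp add: H_def act_def liftP_def)
    ultimately show "monic (fst H)" "degree (fst H) = n" using monic_of by blast+
    have "degree (snd H) \<le> n" unfolding H_def act_def liftP_def fst_conv snd_conv
      by (rule degree_lin_le) (use px in auto)
    moreover have "coeff (snd H) n = 0" using px by (simp add: H_def act_def liftP_def)
    ultimately show "snd H = 0 \<or> degree (snd H) < n" using small_of by blast
    have "[:R n X:] dvd 1" using X by (intro const_unit) (auto simp: pointed_rf_def field_dvd1)
    moreover have "[:1/d:] * [:d:] = (1::'k poly)" using d0 by (simp add: one_pCons)
    ultimately show "R n H dvd 1" unfolding H_def
      by (intro R_act_unit[where a'=1 and b'="-[:b,-b:]*[:1/d:]" and c'=0 and d'="[:1/d:]"])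
        (auto simp: R_lift algebra_simps)
  qed
  from pointed_htpy.htpy[OF this] have "pointed_htpy n (act 1 b 0 d X) (act 1 0 0 d X)"
    unfolding H_def evalT_act evalT_lift by simp
  moreover have "act 1 b 0 d X = Y" using 1 a c by simp
  moreover have "act 1 0 0 d X = lam_sq (inverse \<mu>) X" using d 1 by (simp add: lam_sq_act power_inverse)
  ultimately have "pointed_htpy n Y (lam_sq (inverse \<mu>) X)" by simp
  thus ?thesis using 1 by (intro exI[of _ "inverse \<mu>"]) auto
qed

lemma base:
  fixes P Q :: "'k::field poly \<times> 'k poly"
  assumes "pointed_rf n P" "pointed_rf n Q" "SR F P" "SR F Q"
  shows "\<exists>l. l \<noteq> 0 \<and> pointed_htpy n P (lam_sq l Q)"
  using cmp[OF assms(2,1) SR_trans[OF SR_sym[OF assms(4)] assms(3)]] .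

lemma lam_sq_lam_sq: "lam_sq l (lam_sq m X) = lam_sq (l*m) X"
  by (simp add: lam_sq_def power_mult_distrib)

lemma lam_sq_inv: "(l::'k::field) \<noteq> 0 \<Longrightarrow> lam_sq (inverse l) (lam_sq l X) = X"
  by (simp add: lam_sq_lam_sq) (simp add: lam_sq_def)

lemma unit_poly_eval:
  fixes p :: "'k::field poly"
  assumes "p dvd 1" shows "poly p t \<noteq> 0"
proof -
  from assms obtain w where "1 = p * w" by (auto simp: dvd_def)
  hence "1 = poly p t * poly w t" by (metis poly_1 poly_mult)
  thus ?thesis by auto
qed

lemma pointed_eval:
  fixes H :: "'k::field poly poly \<times> 'k poly poly"
  assumes H: "pointed_rf n H"
  shows "pointed_rf n (evalT_pair t H)"
proof -
  note pc = pointed_coeffs[OF H]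
  have "degree (fst (evalT_pair t H)) \<le> n" "degree (snd (evalT_pair t H)) \<le> n"
    using pc degree_map_poly_le[of "\<lambda>c. poly c t"] by (auto simp: evalT_pair_def evalT_def intro: order_trans)
  moreover have "coeff (fst (evalT_pair t H)) n = 1" "coeff (snd (evalT_pair t H)) n = 0"
    using pc by (simp_all add: evalT_pair_def)
  moreover have "R n (evalT_pair t H) \<noteq> 0" unfolding R_evalT
    using H by (intro unit_poly_eval) (simp add: pointed_rf_def)
  ultimately show ?thesis using monic_of[of "fst (evalT_pair t H)" n] small_of[of "snd (evalT_pair t H)" n]
    by (auto simp: pointed_rf_def field_dvd1)
qed

lemma pointed_lam:
  fixes F :: "'k::field poly \<times> 'k poly"
  assumes "pointed_rf n F" "l \<noteq> 0"
  shows "pointed_rf n (lam_sq l F)"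
  unfolding lam_sq_act
proof (rule pointed_of)
  show "unpointed_map n (act 1 0 0 (inverse (l\<^sup>2)) F)"
    by (rule umap_act[OF pointed_umap[OF assms(1)]]) (use assms(2) in simp)
qed (use pointed_coeffs[OF assms(1)] in \<open>simp_all add: act_def\<close>)

lemma phtpy_scale:
  fixes X Y :: "'k::field poly \<times> 'k poly"
  assumes "pointed_htpy n X Y" "l \<noteq> 0"
  shows "pointed_htpy n (lam_sq l X) (lam_sq l Y)"
  using assms(1)
proof induction
  case (refl F) thus ?case using assms(2) by (intro pointed_htpy.refl pointed_lam)
next
  case (htpy H)
  define c where "c = inverse (l^2)"
  have c0: "c \<noteq> 0" using assms(2) by (simp add: c_def)
  define H' where "H' = act 1 0 0 [:c:] H"
  note pc = pointed_coeffs[OF htpy]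
  have "pointed_rf n H'" unfolding pointed_rf_def
  proof (intro conjI)
    have fH: "fst H' = fst H" by (simp add: H'_def act_def)
    show "monic (fst H')" "degree (fst H') = n" unfolding fH using htpy unfolding pointed_rf_def by blast+
    have "degree (snd H') \<le> n" using pc by (auto simp: H'_def act_def intro: order_trans[OF degree_smult_le])
    moreover have "coeff (snd H') n = 0" using pc by (simp add: H'_def act_def)
    ultimately show "snd H' = 0 \<or> degree (snd H') < n" using small_of by blast
    have "[:1/c:] * [:c:] = (1::'k poly)" using c0 by (simp add: one_pCons)
    thus "R n H' dvd 1" unfolding H'_def using htpy
      by (intro R_act_unit[where a'=1 and b'=0 and c'=0 and d'="[:1/c:]"]) (auto simp: pointed_rf_def)
  qed
  from pointed_htpy.htpy[OF this] show ?case
    unfolding H'_def evalT_act by (simp add: lam_sq_act c_def)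
next
  case (sym F G) thus ?case by (blast intro: pointed_htpy.sym)
next
  case (trans F G H) thus ?case by (blast intro: pointed_htpy.trans)
qed

lemma uhtpy_maps:
  fixes F G :: "'k::field poly \<times> 'k poly"
  assumes "unpointed_htpy n F G"
  shows "unpointed_map n F \<and> unpointed_map n G"
  using assms
proof induction
  case (scal F c)
  have "(smult c (fst F), smult c (snd F)) = act c 0 0 c F" by (simp add: act_def)
  moreover have "unpointed_map n (act c 0 0 c F)" by (rule umap_act[OF scal(1)]) (use scal in simp)
  ultimately show ?case using scal by simp
next
  case (htpy H)
  have "unpointed_map n (evalT_pair t H)" for t
  proof -
    from htpy obtain cc dd :: "nat \<Rightarrow> 'k poly" where u: "(\<Sum>i\<le>n. cc i * coeff (fst H) i + dd i * coeff (snd H) i) = 1"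
      and dg: "degree (fst H) \<le> n" "degree (snd H) \<le> n" and r: "R n H dvd 1"
      unfolding unpointed_homotopy_def by blast
    have "(\<Sum>i\<le>n. poly (cc i) t * coeff (fst (evalT_pair t H)) i + poly (dd i) t * coeff (snd (evalT_pair t H)) i) = 1"
      using arg_cong[OF u, of "\<lambda>p. poly p t"] by (simp add: poly_sum evalT_pair_def)
    hence "evalT_pair t H \<noteq> (0,0)" by auto
    moreover have "R n (evalT_pair t H) \<noteq> 0" unfolding R_evalT using r by (rule unit_poly_eval)
    moreover have "degree (fst (evalT_pair t H)) \<le> n" "degree (snd (evalT_pair t H)) \<le> n"
      using dg degree_map_poly_le[of "\<lambda>c. poly c t"] by (auto simp: evalT_pair_def evalT_def intro: order_trans)
    ultimately show ?thesis by (simp add: unpointed_map_def)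
  qed
  thus ?case by simp
qed auto

lemma lead_unimod:
  fixes H :: "'a::comm_ring_1 poly \<times> 'a poly"
  assumes r: "R n H dvd 1"
    and z: "n = 0 \<Longrightarrow> \<exists>c d :: nat \<Rightarrow> 'a. (\<Sum>i\<le>n. c i * coeff (fst H) i + d i * coeff (snd H) i) = 1"
  shows "\<exists>u v. u * coeff (fst H) n + v * coeff (snd H) n = 1"
proof (cases "n = 0")
  case True
  then obtain c d :: "nat \<Rightarrow> 'a" where "(\<Sum>i\<le>n. c i * coeff (fst H) i + d i * coeff (snd H) i) = 1" using z by blast
  thus ?thesis using True by auto
next
  case False
  have "R n H = (\<Sum>i<n+n. S n H $$ (i,0) * cofactor (S n H) i 0)"
    unfolding res_nn_def resultant_sub_def using False by (intro laplace_expansion_column) auto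
  also have "\<dots> = (\<Sum>i\<in>{0..<n+n}. ((if i = 0 then coeff (fst H) n else 0) + (if i = n then coeff (snd H) n else 0)) * cofactor (S n H) i 0)"
    unfolding lessThan_atLeast0 using False by (intro sum.cong) (auto simp: sylvester_mat_sub_index)
  also have "\<dots> = coeff (fst H) n * cofactor (S n H) 0 0 + coeff (snd H) n * cofactor (S n H) n 0"
    using False by (intro sum_two) auto
  finally have eq: "R n H = coeff (fst H) n * cofactor (S n H) 0 0 + coeff (snd H) n * cofactor (S n H) n 0" .
  from r obtain w where "1 = R n H * w" by (auto simp: dvd_def)
  hence "(cofactor (S n H) 0 0 * w) * coeff (fst H) n + (cofactor (S n H) n 0 * w) * coeff (snd H) n = 1"
    unfolding eq by (simp add: algebra_simps)
  thus ?thesis by blast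
qed

lemma chain:
  fixes P X Q :: "'k::field poly \<times> 'k poly"
  assumes "l1 \<noteq> 0" "pointed_htpy n P (lam_sq l1 X)" "l2 \<noteq> 0" "pointed_htpy n X (lam_sq l2 Q)"
  shows "\<exists>l. l \<noteq> 0 \<and> pointed_htpy n P (lam_sq l Q)"
proof -
  have "pointed_htpy n (lam_sq l1 X) (lam_sq (l1*l2) Q)"
    using phtpy_scale[OF assms(4) assms(1)] by (simp add: lam_sq_lam_sq)
  with assms show ?thesis by (intro exI[of _ "l1*l2"]) (auto intro: pointed_htpy.trans)
qed

lemma SR_det1: "a*d - b*c = (1::'k::field) \<Longrightarrow> SR X (act a b c d X)"
  unfolding SR_def by (rule exI[of _ a], rule exI[of _ b], rule exI[of _ c], rule exI[of _ d], rule exI[of _ 1]) simp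

lemma main_claim:
  fixes F G :: "'k::field poly \<times> 'k poly"
  assumes "unpointed_htpy n F G"
  shows "\<forall>P Q. pointed_rf n P \<longrightarrow> pointed_rf n Q \<longrightarrow> SR F P \<longrightarrow> SR G Q \<longrightarrow>
           (\<exists>l. l \<noteq> 0 \<and> pointed_htpy n P (lam_sq l Q))"
  using assms
proof induction
  case (refl F) thus ?case using base by blast
next
  case (scal F c)
  show ?case
  proof (intro allI impI)
    fix P Q assume a: "pointed_rf n P" "pointed_rf n Q" "SR F P" "SR (smult c (fst F), smult c (snd F)) Q"
    have "SR F Q" by (rule SR_trans[OF SR_scal[OF scal(2)] a(4)])
    thus "\<exists>l. l \<noteq> 0 \<and> pointed_htpy n P (lam_sq l Q)" using base a by blast
  qed
next
  case (htpy H)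
  define \<alpha> where "\<alpha> = coeff (fst H) n"
  define \<beta> where "\<beta> = coeff (snd H) n"
  obtain u v where uv: "u * \<alpha> + v * \<beta> = 1"
    using lead_unimod[of n H] htpy unfolding unpointed_homotopy_def \<alpha>_def \<beta>_def by blast
  define H' where "H' = act u v (-\<beta>) \<alpha> H"
  have pH': "pointed_rf n H'" unfolding pointed_rf_def
  proof (intro conjI)
    have "degree (fst H') \<le> n" using htpy
      unfolding H'_def act_def fst_conv snd_conv unpointed_homotopy_def by (intro degree_lin_le) auto
    moreover have "coeff (fst H') n = 1" using uv by (simp add: H'_def act_def \<alpha>_def \<beta>_def algebra_simps)
    ultimately show "monic (fst H')" "degree (fst H') = n" using monic_of by blast+
    have "degree (snd H') \<le> n" using htpy
      unfolding H'_def act_def fst_conv snd_conv unpointed_homotopy_def by (intro degree_lin_le) auto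
    moreover have "coeff (snd H') n = 0" by (simp add: H'_def act_def \<alpha>_def \<beta>_def algebra_simps)
    ultimately show "snd H' = 0 \<or> degree (snd H') < n" using small_of by blast
    show "R n H' dvd 1" unfolding H'_def
      by (rule R_act_unit[where a'=\<alpha> and b'="-v" and c'=\<beta> and d'=u])
        (use uv htpy in \<open>auto simp: algebra_simps unpointed_homotopy_def\<close>)
  qed
  define X0 where "X0 = evalT_pair 0 H'"
  define X1 where "X1 = evalT_pair 1 H'"
  have pX0: "pointed_rf n X0" and pX1: "pointed_rf n X1" unfolding X0_def X1_def using pointed_eval[OF pH'] by auto
  have h01: "pointed_htpy n X0 X1" unfolding X0_def X1_def by (rule pointed_htpy.htpy[OF pH'])
  have "SR (evalT_pair t H) (evalT_pair t H')" for t
  proof -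
    have "poly u t * poly \<alpha> t - poly v t * poly (-\<beta>) t = poly (u * \<alpha> + v * \<beta>) t" by simp
    hence "poly u t * poly \<alpha> t - poly v t * poly (-\<beta>) t = 1" unfolding uv by simp
    thus ?thesis unfolding H'_def evalT_act by (rule SR_det1)
  qed
  hence S0: "SR (evalT_pair 0 H) X0" and S1: "SR (evalT_pair 1 H) X1" unfolding X0_def X1_def by auto
  show ?case
  proof (intro allI impI)
    fix P Q assume a: "pointed_rf n P" "pointed_rf n Q" "SR (evalT_pair 0 H) P" "SR (evalT_pair 1 H) Q"
    obtain l1 where l1: "l1 \<noteq> 0" "pointed_htpy n P (lam_sq l1 X0)" using base[OF a(1) pX0 a(3) S0] by blast
    obtain l2 where l2: "l2 \<noteq> 0" "pointed_htpy n X1 (lam_sq l2 Q)" using base[OF pX1 a(2) S1 a(4)] by blast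
    have "pointed_htpy n P (lam_sq l1 X1)"
      using pointed_htpy.trans[OF l1(2) phtpy_scale[OF h01 l1(1)]] .
    thus "\<exists>l. l \<noteq> 0 \<and> pointed_htpy n P (lam_sq l Q)" using chain[OF l1(1) _ l2] by blast
  qed
next
  case (sym F G)
  show ?case
  proof (intro allI impI)
    fix P Q assume a: "pointed_rf n P" "pointed_rf n Q" "SR G P" "SR F Q"
    obtain l where l: "l \<noteq> 0" "pointed_htpy n Q (lam_sq l P)" using sym.IH a by blast
    have "pointed_htpy n (lam_sq (inverse l) Q) P"
      using phtpy_scale[OF l(2), of "inverse l"] l(1) by (simp add: lam_sq_inv)
    hence "pointed_htpy n P (lam_sq (inverse l) Q)" by (rule pointed_htpy.sym)
    thus "\<exists>l. l \<noteq> 0 \<and> pointed_htpy n P (lam_sq l Q)" using l(1) by (intro exI[of _ "inverse l"]) auto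
  qed
next
  case (trans F G H)
  have G: "unpointed_map n G" using uhtpy_maps[OF trans.hyps(1)] by blast
  obtain a b c d where X: "a*d - b*c = 1" "pointed_rf n (act a b c d G)" using normalizer[OF G] by blast
  have SX: "SR G (act a b c d G)" by (rule SR_det1[OF X(1)])
  show ?case
  proof (intro allI impI)
    fix P Q assume as: "pointed_rf n P" "pointed_rf n Q" "SR F P" "SR H Q"
    obtain l1 where l1: "l1 \<noteq> 0" "pointed_htpy n P (lam_sq l1 (act a b c d G))" using trans.IH(1) as X SX by blast
    obtain l2 where l2: "l2 \<noteq> 0" "pointed_htpy n (act a b c d G) (lam_sq l2 Q)" using trans.IH(2) as X SX by blast
    show "\<exists>l. l \<noteq> 0 \<and> pointed_htpy n P (lam_sq l Q)" by (rule chain[OF l1 l2])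
  qed
qed

theorem lemma4p4:
  fixes n :: nat
  shows "(\<forall>F :: 'k::field poly \<times> 'k poly. unpointed_map n F \<longrightarrow>
            (\<exists>G. pointed_rf n G \<and> unpointed_htpy n F G))
      \<and> (\<forall>f g :: 'k poly \<times> 'k poly. pointed_rf n f \<longrightarrow> pointed_rf n g \<longrightarrow>
            (unpointed_htpy n f g \<longleftrightarrow> (\<exists>l. l \<noteq> 0 \<and> pointed_htpy n f (lam_sq l g))))"
proof (intro conjI allI impI iffI)
  fix F :: "'k poly \<times> 'k poly" assume "unpointed_map n F"
  thus "\<exists>G. pointed_rf n G \<and> unpointed_htpy n F G" by (rule part1)
next
  fix f g :: "'k poly \<times> 'k poly"
  assume f: "pointed_rf n f" and g: "pointed_rf n g"
  {
    assume "unpointed_htpy n f g"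
    from main_claim[OF this] f g SR_refl
    show "\<exists>l. l \<noteq> 0 \<and> pointed_htpy n f (lam_sq l g)" by blast
  next
    assume "\<exists>l. l \<noteq> 0 \<and> pointed_htpy n f (lam_sq l g)"
    then obtain l where l: "l \<noteq> 0" "pointed_htpy n f (lam_sq l g)" by blast
    show "unpointed_htpy n f g"
      using unpointed_htpy.trans[OF phtpy_uhtpy[OF l(2)] lam_sq_uhtpy[OF pointed_umap[OF g] l(1)]] .
  }
qed

end
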